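(* Let $k,a,b$ be positive real numbers and $\{S^{(a,b)}_{k,n}\}_{n\ge0}$ the $k$-FL sequence, and let $\alpha>\beta$ be the roots of $x^2-kx-1$. For any real number $p$ with $p\notin\{0,\alpha,\beta\}$ and any integer $n\ge1$, $\sum_{i=1}^n\frac{S^{(a,b)}_{k,i}}{p^i}=\frac{1}{(p^2-pk-1)p^n}\Big(-S^{(a,b)}_{k,n}-pS^{(a,b)}_{k,n+1}+p^{n+1}(a+bk)+2bp^n\Big)$.
   Context: The $k$-FL sequence (for positive reals $k,a,b$) is $S^{(a,b)}_{k,0}=2b$, $S^{(a,b)}_{k,1}=bk+a$, $S^{(a,b)}_{k,n}=kS^{(a,b)}_{k,n-1}+S^{(a,b)}_{k,n-2}$. *)

theory Defs
  imports Complex_Main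
begin

fun kFL :: "real \<Rightarrow> real \<Rightarrow> real \<Rightarrow> nat \<Rightarrow> real" where
  "kFL k a b 0 = 2 * b"
| "kFL k a b (Suc 0) = b * k + a"
| "kFL k a b (Suc (Suc n)) = k * kFL k a b (Suc n) + kFL k a b n"

end

theory Submission
  imports Defs
begin

lemma kFL_key:
  fixes k a b p :: real and n :: nat
  assumes "p \<noteq> 0"
  shows "(p\<^sup>2 - p * k - 1) * p ^ n * (\<Sum>i=1..n. kFL k a b i / p ^ i) =
      - kFL k a b n - p * kFL k a b (n + 1) + p ^ (n + 1) * (a + b * k) + 2 * b * p ^ n"
proof (induction n)
  case 0
  then show ?case by (simp add: algebra_simps)
next
  case (Suc n)
  have s: "(\<Sum>i=1..Suc n. kFL k a b i / p ^ i) = (\<Sum>i=1..n. kFL k a b i / p ^ i) + kFL k a b (Suc n) / p ^ Suc n"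
    by simp
  have e: "(p\<^sup>2 - p * k - 1) * p ^ Suc n * (kFL k a b (Suc n) / p ^ Suc n) = (p\<^sup>2 - p * k - 1) * kFL k a b (Suc n)"
    using assms by simp
  have "(p\<^sup>2 - p * k - 1) * p ^ Suc n * (\<Sum>i=1..Suc n. kFL k a b i / p ^ i)
      = p * ((p\<^sup>2 - p * k - 1) * p ^ n * (\<Sum>i=1..n. kFL k a b i / p ^ i)) + (p\<^sup>2 - p * k - 1) * kFL k a b (Suc n)"
    unfolding s distrib_left e by (simp add: algebra_simps)
  also have "\<dots> = - kFL k a b (Suc n) - p * kFL k a b (Suc n + 1) + p ^ (Suc n + 1) * (a + b * k) + 2 * b * p ^ Suc n"
    unfolding Suc.IH by (simp add: algebra_simps power2_eq_square)
  finally show ?case .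
qed

theorem theorem4p27:
  fixes k a b \<alpha> \<beta> p :: real and n :: nat
  assumes "k > 0" and "a > 0" and "b > 0"
    and "\<alpha>\<^sup>2 - k * \<alpha> - 1 = 0" and "\<beta>\<^sup>2 - k * \<beta> - 1 = 0" and "\<alpha> > \<beta>"
    and "p \<noteq> 0" and "p \<noteq> \<alpha>" and "p \<noteq> \<beta>"
    and "n \<ge> 1"
  shows "(\<Sum>i=1..n. kFL k a b i / p ^ i) =
    1 / ((p\<^sup>2 - p * k - 1) * p ^ n) *
      (- kFL k a b n - p * kFL k a b (n + 1) + p ^ (n + 1) * (a + b * k) + 2 * b * p ^ n)"
proof -
  have ab: "\<alpha> + \<beta> = k"
  proof -
    have "(\<alpha> - \<beta>) * (\<alpha> + \<beta> - k) = 0" using assms(4,5) by (simp add: algebra_simps power2_eq_square)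
    then show ?thesis using assms(6) by simp
  qed
  have ab2: "\<alpha> * \<beta> = -1"
  proof -
    have "\<beta> = k - \<alpha>" using ab by simp
    then have "\<alpha> * \<beta> = \<alpha> * k - \<alpha>\<^sup>2" by (simp only: power2_eq_square right_diff_distrib)
    then show ?thesis using assms(4) by (simp add: mult.commute)
  qed
  have "p\<^sup>2 - p * k - 1 = (p - \<alpha>) * (p - \<beta>)"
  proof -
    have "(p - \<alpha>) * (p - \<beta>) = p\<^sup>2 - p * (\<alpha> + \<beta>) + \<alpha> * \<beta>"
      by (simp add: algebra_simps power2_eq_square)
    then show ?thesis using ab ab2 by simp
  qed
  hence nz: "p\<^sup>2 - p * k - 1 \<noteq> 0" using assms(8,9) by simp
  have "(p\<^sup>2 - p * k - 1) * p ^ n \<noteq> 0" using nz assms(7) by simp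
  then show ?thesis using kFL_key[OF assms(7), of k n a b]
    by (simp add: field_simps)
qed

end
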